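(* Let $q\in\mathbb{C}\setminus\{0\}$, let $n\ge 1$ be an integer, and let $P,f\in\mathbb{C}[x^{-1}][[x]]$ with $P\neq 0$ satisfy $$x\,\sigma_q f+f=P .$$ Then $$L_{n,n}^P\,(f^n)=(-1)^{n(n-1)/2},$$ where $$L_{n,n}^P=\frac{1}{P_n}\left(x\sigma_q+1\right)\frac{1}{P_{n-1}}\left(x^2\sigma_q-1\right)\cdots\frac{1}{P_1}\left(x^n\sigma_q-(-1)^n\right),$$ i.e. $L_{n,n}^P=\frac{1}{P_n}\left(x^{1}\sigma_q-(-1)^{1}\right)\frac{1}{P_{n-1}}\left(x^{2}\sigma_q-(-1)^{2}\right)\cdots\frac{1}{P_1}\left(x^{n}\sigma_q-(-1)^{n}\right)$.
   Context: $\mathbb{C}[x^{-1}][[x]]$ is the field of formal Laurent series in $x$ with finitely many negative powers. $\sigma_q$ is the automorphism $\sigma_q f(x)=f(qx)$ of this field; $\sigma_q^k=\sigma_{q^k}$. Elements of the field act as multiplication operators, and products of operators denote composition. Define the sequence $P_0=0$, $P_1=P$, and $P_m=\sum_{k=0}^{m-1}(-x\sigma_q)^kP$ for $m\ge 2$ (so $(-x\sigma_q)^kP=(-x)^kq^{k(k-1)/2}\sigma_q^kP$). These $P_m$ ($m\ge1$) are nonzero, so the operator above is well defined. *)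

theory Defs
  imports "HOL-Computational_Algebra.Formal_Laurent_Series"
begin

text \<open>The q-dilation automorphism sigma_q f(x) = f(q x) on formal Laurent series:
  the coefficient of x^n is multiplied by q^n (n an integer).\<close>
lift_definition fls_sigma :: "complex \<Rightarrow> complex fls \<Rightarrow> complex fls" is
  "\<lambda>q f n. q powi n * f n"
  by (auto elim: eventually_mono)

definition Pseq :: "complex \<Rightarrow> complex fls \<Rightarrow> nat \<Rightarrow> complex fls" where
  "Pseq q P m = (\<Sum>k<m. ((\<lambda>g. - fls_X * fls_sigma q g) ^^ k) P)"

definition Lfactor :: "complex \<Rightarrow> complex fls \<Rightarrow> nat \<Rightarrow> nat \<Rightarrow> complex fls \<Rightarrow> complex fls" where
  "Lfactor q P n k g =
     inverse (Pseq q P (n + 1 - k)) * (fls_X ^ k * fls_sigma q g - (-1) ^ k * g)"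

text \<open>L^P_{n,n} = Lfactor 1 o Lfactor 2 o ... o Lfactor n (operator composition,
  the rightmost factor acting first).\<close>
definition Lnn :: "complex \<Rightarrow> complex fls \<Rightarrow> nat \<Rightarrow> complex fls \<Rightarrow> complex fls" where
  "Lnn q P n = foldr (\<lambda>k F. Lfactor q P n k \<circ> F) [1..<n+1] id"

end

theory Submission
  imports Defs
begin
unbundle fps_syntax

lemma sig_nth [simp]: "fls_sigma q f $$ n = q powi n * f $$ n"
  by transfer simp

lemma sig_add: "fls_sigma q (a + b) = fls_sigma q a + fls_sigma q b"
  by (rule fls_eqI) (simp add: algebra_simps)
lemma sig_minus: "fls_sigma q (- a) = - fls_sigma q a"
  by (rule fls_eqI) simp
lemma sig_diff: "fls_sigma q (a - b) = fls_sigma q a - fls_sigma q b"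
  by (rule fls_eqI) (simp add: algebra_simps)
lemma sig_zero [simp]: "fls_sigma q 0 = 0"
  by (rule fls_eqI) simp
lemma sig_one [simp]: "fls_sigma q 1 = 1"
  by (rule fls_eqI) simp
lemma sig_eq0: "q \<noteq> 0 \<Longrightarrow> fls_sigma q f = 0 \<longleftrightarrow> f = 0"
proof
  assume "q \<noteq> 0" "fls_sigma q f = 0"
  then show "f = 0" by (intro fls_eqI) (metis fls_zero_nth mult_eq_0_iff power_int_eq_0_iff sig_nth)
qed simp

lemma sig_subdeg: assumes "q \<noteq> 0" shows "fls_subdegree (fls_sigma q f) = fls_subdegree f"
proof (cases "f = 0")
  case False
  show ?thesis
  proof (rule fls_subdegree_eqI)
    show "fls_sigma q f $$ fls_subdegree f \<noteq> 0" using False assms by simp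
    fix k assume "k < fls_subdegree f" then show "fls_sigma q f $$ k = 0" by simp
  qed
qed simp

lemma sig_mult: assumes "q \<noteq> 0"
  shows "fls_sigma q (a * b) = fls_sigma q a * fls_sigma q b"
proof (rule fls_eqI)
  fix n
  show "fls_sigma q (a * b) $$ n = (fls_sigma q a * fls_sigma q b) $$ n"
    unfolding sig_nth fls_times_nth(2)[of _ _ n] sig_subdeg[OF assms] sum_distrib_left
  proof (rule sum.cong)
    fix i show "q powi n * (a $$ i * b $$ (n - i)) = q powi i * a $$ i * (q powi (n - i) * b $$ (n - i))"
      using assms by (simp add: power_int_add[symmetric])
  qed simp
qed

lemma sig_power: "q \<noteq> 0 \<Longrightarrow> fls_sigma q (a ^ k) = fls_sigma q a ^ k"
  by (induction k) (simp_all add: sig_mult)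

lemma sig_sum: "fls_sigma q (sum g A) = (\<Sum>i\<in>A. fls_sigma q (g i))"
  by (induction A rule: infinite_finite_induct) (simp_all add: sig_add)

fun hl :: "'a::comm_ring_1 list \<Rightarrow> nat \<Rightarrow> 'a" where
  "hl [] k = (if k = 0 then 1 else 0)"
| "hl (a # as) k = (\<Sum>i\<le>k. a ^ i * hl as (k - i))"

lemma hl_zero [simp]: "hl as 0 = 1"
  by (induction as) auto

lemma hl_single: "hl [a] k = a ^ k"
proof -
  have "hl [a] k = (\<Sum>i\<le>k. a ^ i * (if k = i then 1 else 0))"
    by simp
  also have "\<dots> = (\<Sum>i\<le>k. if k = i then a ^ i else 0)"
    by (rule sum.cong) auto
  also have "\<dots> = a ^ k" by simp
  finally show ?thesis .
qed

lemma hl_cons_Suc: "hl (a # as) (Suc k) = hl as (Suc k) + a * hl (a # as) k"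
  by (simp add: sum.atMost_Suc_shift sum_distrib_left mult.assoc del: sum.atMost_Suc)

lemma ring_aux: "(A1::'a::comm_ring_1) = C1 + a*A0 \<Longrightarrow> A1 = B1 + b*A0 \<Longrightarrow> C2 = D2 + b*C1
   \<Longrightarrow> A2 = C2 + a*A1 \<Longrightarrow> B2 = D2 + a*B1 \<Longrightarrow> A2 = B2 + b*A1"
proof -
  assume h: "A1 = C1 + a*A0" "A1 = B1 + b*A0" "C2 = D2 + b*C1" "A2 = C2 + a*A1" "B2 = D2 + a*B1"
  have "a*B1 + b*A1 - (b*C1 + a*A1) = a*(B1 + b*A0 - A1) + b*(A1 - C1 - a*A0)"
    by (simp add: algebra_simps)
  also have "\<dots> = 0" using h(1,2) by simp
  finally have "a*B1 + b*A1 = b*C1 + a*A1" by simp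
  then show ?thesis using h(3,4,5) by (simp add: algebra_simps)
qed

lemma hl_snoc: "hl (as @ [b]) (Suc k) = hl as (Suc k) + b * hl (as @ [b]) k"
proof (induction as arbitrary: k)
  case Nil
  then show ?case by (simp del: hl.simps(2) add: hl_single)
next
  case (Cons a as)
  have IH: "\<And>k. hl (as @ [b]) (Suc k) = hl as (Suc k) + b * hl (as @ [b]) k" by (rule Cons.IH)
  show ?case
  proof (induction k)
    case 0
    show ?case
      using IH[of 0] hl_cons_Suc[of a "as @ [b]" 0] hl_cons_Suc[of a as 0]
      by (simp del: hl.simps(2) add: algebra_simps)
  next
    case (Suc k)
    then have S: "hl (a # as @ [b]) (Suc k) = hl (a # as) (Suc k) + b * hl (a # as @ [b]) k"
      by (simp only: append_Cons)
    show ?case unfolding append_Cons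
      by (rule ring_aux[OF hl_cons_Suc[of a "as @ [b]" k] S IH[of "Suc k"]
         hl_cons_Suc[of a "as @ [b]" "Suc k"] hl_cons_Suc[of a as "Suc k"]])
  qed
qed

lemma hl_diff: "hl (L @ [b]) (Suc k) - hl (a # L) (Suc k) = (b - a) * hl (a # L @ [b]) k"
  using hl_snoc[of "a # L" b k] hl_cons_Suc[of a "L @ [b]" k] by (simp add: algebra_simps)

lemma hl_neg: "hl (map uminus as) k = (-1) ^ k * hl as k"
proof (induction as arbitrary: k)
  case (Cons a as)
  have "hl (map uminus (a # as)) k = (\<Sum>i\<le>k. (-1) ^ k * (a ^ i * hl as (k - i)))"
    unfolding list.map hl.simps
  proof (rule sum.cong)
    fix i assume "i \<in> {..k}"
    then have "(-1::'a) ^ i * (-1) ^ (k - i) = (-1) ^ k" by (simp add: power_add[symmetric])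
    then show "(- a) ^ i * hl (map uminus as) (k - i) = (-1) ^ k * (a ^ i * hl as (k - i))"
      using Cons.IH by (simp add: power_minus[of a] algebra_simps)
  qed simp
  then show ?case by (simp add: sum_distrib_left)
qed simp

lemma hl_sig: assumes "q \<noteq> 0"
  shows "fls_X ^ k * fls_sigma q (hl L k) = hl (map (\<lambda>g. fls_X * fls_sigma q g) L) k"
proof (induction L arbitrary: k)
  case Nil
  then show ?case by simp
next
  case (Cons a as)
  have "fls_X ^ k * fls_sigma q (hl (a # as) k)
     = (\<Sum>i\<le>k. fls_X ^ k * (fls_sigma q a ^ i * fls_sigma q (hl as (k - i))))"
    by (simp only: hl.simps sig_sum sig_mult[OF assms] sig_power[OF assms] sum_distrib_left)
  also have "\<dots> = (\<Sum>i\<le>k. (fls_X * fls_sigma q a) ^ i * (fls_X ^ (k - i) * fls_sigma q (hl as (k - i))))"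
  proof (rule sum.cong)
    fix i assume "i \<in> {..k}"
    then have "(fls_X::complex fls) ^ k = fls_X ^ i * fls_X ^ (k - i)" by (simp add: power_add[symmetric])
    then show "fls_X ^ k * (fls_sigma q a ^ i * fls_sigma q (hl as (k - i))) =
         (fls_X * fls_sigma q a) ^ i * (fls_X ^ (k - i) * fls_sigma q (hl as (k - i)))"
      by (simp only: power_mult_distrib mult_ac)
  qed simp
  also have "\<dots> = hl (map (\<lambda>g. fls_X * fls_sigma q g) (a # as)) k"
    by (simp only: list.map hl.simps Cons.IH)
  finally show ?case .
qed

declare hl.simps(2)[simp del]

lemma Pseq_0 [simp]: "Pseq q P 0 = 0" by (simp add: Pseq_def)

lemma Pseq_T: assumes "q \<noteq> 0"
  shows "fls_X * fls_sigma q (Pseq q P j) = P - Pseq q P (Suc j)"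
proof -
  let ?R = "\<lambda>g. - fls_X * fls_sigma q g"
  have "Pseq q P (Suc j) = P + (\<Sum>k<j. (?R ^^ Suc k) P)"
    unfolding Pseq_def by (simp add: sum.lessThan_Suc_shift del: sum.lessThan_Suc)
  also have "(\<Sum>k<j. (?R ^^ Suc k) P) = - (fls_X * fls_sigma q (Pseq q P j))"
    unfolding Pseq_def sig_sum by (simp add: sum_distrib_left sum_negf)
  finally show ?thesis by simp
qed

lemma y_T: assumes "q \<noteq> 0" and hf: "fls_X * fls_sigma q f + f = P"
  shows "fls_X * fls_sigma q (Pseq q P j - f) = - (Pseq q P (Suc j) - f)"
proof -
  have "fls_X * fls_sigma q (Pseq q P j - f) = fls_X * fls_sigma q (Pseq q P j) - fls_X * fls_sigma q f"
    by (simp add: sig_diff algebra_simps)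
  also have "\<dots> = (P - Pseq q P (Suc j)) - (P - f)"
    using Pseq_T[OF assms(1)] hf by (simp add: algebra_simps)
  finally show ?thesis by simp
qed

lemma Pseq_nz: assumes "q \<noteq> 0" "P \<noteq> 0" "m \<ge> 1" shows "Pseq q P m \<noteq> 0"
proof -
  let ?R = "\<lambda>g. - fls_X * fls_sigma q g"
  define d where "d = fls_subdegree P"
  have Z: "\<forall>i\<le>d. ((?R ^^ Suc k) P) $$ i = 0" for k
  proof (induction k)
    case 0
    show ?case by (auto simp: fls_X_times_conv_shift d_def)
  next
    case (Suc k)
    show ?case
    proof (intro allI impI)
      fix i assume "i \<le> d"
      then have "((?R ^^ Suc k) P) $$ (i - 1) = 0" using Suc by simp
      moreover have "(?R ^^ Suc (Suc k)) P = ?R ((?R ^^ Suc k) P)"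
        by (simp only: funpow.simps o_apply)
      ultimately show "((?R ^^ Suc (Suc k)) P) $$ i = 0"
        by (simp add: fls_X_times_conv_shift del: funpow.simps)
    qed
  qed
  obtain m' where m': "m = Suc m'" using assms(3) by (cases m) auto
  have S: "(\<Sum>k<j. (?R ^^ Suc k) P) $$ d = 0" for j
    by (induction j) (use Z in auto)
  have "Pseq q P m = P + (\<Sum>k<m'. (?R ^^ Suc k) P)"
    unfolding Pseq_def m' by (simp add: sum.lessThan_Suc_shift del: sum.lessThan_Suc)
  then have "Pseq q P m $$ d = P $$ d" using S by simp
  moreover have "P $$ d \<noteq> 0" using assms(2) d_def by simp
  ultimately show ?thesis by auto
qed

lemma sig_sign: "q \<noteq> 0 \<Longrightarrow> fls_sigma q ((-1) ^ e * h) = (-1) ^ e * fls_sigma q h"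
  by (simp add: sig_mult sig_power sig_minus)

lemma main_ind:
  assumes q: "q \<noteq> 0" and P: "P \<noteq> 0" and hf: "fls_X * fls_sigma q f + f = P"
  shows "i \<le> n \<Longrightarrow> foldr (\<lambda>k F. Lfactor q P n k \<circ> F) [n+1-i..<n+1] id (f ^ n)
     = (-1) ^ (n + (\<Sum>t<i. n - t)) * hl (map (\<lambda>j. Pseq q P j - f) [0..<Suc i]) (n - i)"
proof (induction i)
  case 0
  have e: "[n+1-0..<n+1] = []" by simp
  have m: "map (\<lambda>j. Pseq q P j - f) [0..<Suc 0] = [- f]" by simp
  have h: "(-1::complex fls) ^ n * (-1) ^ n = 1" by (simp add: power_mult_distrib[symmetric])
  have "(-1) ^ n * (- f) ^ n = f ^ n"
    unfolding power_minus[of f] mult.assoc[symmetric] h by simp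
  then show ?case unfolding e m hl_single by simp
next
  case (Suc i)
  define y where "y = (\<lambda>j. Pseq q P j - f)"
  define j where "j = n - i"
  define k where "k = n - Suc i"
  define s :: "complex fls" where "s = (-1) ^ (n + (\<Sum>t<i. n - t))"
  have jk: "j = Suc k" using Suc.prems by (simp add: j_def k_def)
  have j1: "n + 1 - Suc i = j" "Suc j = n + 1 - i" "n + 1 - j = Suc i" using Suc.prems by (auto simp: j_def)
  have "j < n + 1" unfolding j_def by simp
  then have "[j..<n+1] = j # [Suc j..<n+1]" by (rule upt_conv_Cons)
  then have ups: "[j..<n+1] = j # [n+1-i..<n+1]" unfolding j1(2) .
  have IH: "foldr (\<lambda>k F. Lfactor q P n k \<circ> F) [n+1-i..<n+1] id (f ^ n) = s * hl (map y [0..<Suc i]) j"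
    unfolding s_def y_def j_def by (rule Suc.IH) (use Suc.prems in simp)
  have L1: "map y [0..<Suc i] = y 0 # map y [1..<Suc i]" by (simp add: upt_conv_Cons del: upt_Suc)
  have L2: "map y [1..<Suc (Suc i)] = map y [1..<Suc i] @ [y (Suc i)]" by simp
  have L3: "map y [0..<Suc (Suc i)] = y 0 # map y [1..<Suc i] @ [y (Suc i)]"
  proof -
    have "map y [0..<Suc (Suc i)] = y 0 # map y [1..<Suc (Suc i)]" by (simp add: upt_conv_Cons del: upt_Suc)
    then show ?thesis unfolding L2 by simp
  qed
  have MU: "map (\<lambda>g. fls_X * fls_sigma q g) (map y [0..<Suc i]) = map uminus (map y [1..<Suc (Suc i)])"
  proof -
    have a: "map (\<lambda>g. fls_X * fls_sigma q g) (map y [0..<Suc i]) = map (\<lambda>t. - y (Suc t)) [0..<Suc i]"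
      by (simp add: y_T[OF q hf] y_def del: upt_Suc)
    have "[1..<Suc (Suc i)] = map Suc [0..<Suc i]" by (simp only: map_Suc_upt One_nat_def)
    then have "map uminus (map y [1..<Suc (Suc i)]) = map (\<lambda>t. - y (Suc t)) [0..<Suc i]"
      by (simp del: upt_Suc)
    then show ?thesis using a by simp
  qed
  have XS: "fls_X ^ j * fls_sigma q (hl (map y [0..<Suc i]) j) = (-1) ^ j * hl (map y [1..<Suc (Suc i)]) j"
    unfolding hl_sig[OF q] MU hl_neg ..
  have D: "hl (map y [1..<Suc (Suc i)]) j - hl (map y [0..<Suc i]) j
      = Pseq q P (Suc i) * hl (map y [0..<Suc (Suc i)]) k"
    unfolding L1 L2 L3 jk hl_diff by (simp add: y_def)
  have nz: "Pseq q P (Suc i) \<noteq> 0" using Pseq_nz[OF q P] by simp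
  have "foldr (\<lambda>k F. Lfactor q P n k \<circ> F) [n + 1 - Suc i..<n + 1] id (f ^ n)
      = Lfactor q P n j (s * hl (map y [0..<Suc i]) j)"
    unfolding j1(1) ups using IH by simp
  also have "\<dots> = inverse (Pseq q P (Suc i)) * (s * (-1) ^ j *
       (hl (map y [1..<Suc (Suc i)]) j - hl (map y [0..<Suc i]) j))"
  proof -
    have SX: "fls_X ^ j * fls_sigma q (s * hl (map y [0..<Suc i]) j) = s * ((-1) ^ j * hl (map y [1..<Suc (Suc i)]) j)"
      unfolding s_def sig_sign[OF q] using XS by (metis mult.left_commute)
    show ?thesis unfolding Lfactor_def j1(3) SX by (simp add: algebra_simps)
  qed
  also have "\<dots> = s * (-1) ^ j * hl (map y [0..<Suc (Suc i)]) k"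
    unfolding D using nz by (simp add: field_simps)
  also have "s * (-1) ^ j = (-1) ^ (n + (\<Sum>t<Suc i. n - t))"
    by (simp add: s_def j_def power_add)
  finally show ?case by (simp add: y_def k_def)
qed

lemma sum_rev: "2 * (\<Sum>t<n. n - t) = n * (n + 1::nat)"
proof (induction n)
  case (Suc n)
  have "(\<Sum>t<n. Suc n - t) = (\<Sum>t<n. (n - t) + 1)"
    by (rule sum.cong) auto
  then have "(\<Sum>t<Suc n. Suc n - t) = (\<Sum>t<n. n - t) + n + 1"
    by (simp add: sum_Suc)
  then show ?case using Suc by (simp add: algebra_simps)
qed simp

lemma sign_final: assumes "n \<ge> 1"
  shows "(-1::complex fls) ^ (n + (\<Sum>t<n. n - t)) = (-1) ^ (n * (n - 1) div 2)"
proof -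
  have "even (n * (n - 1))" by (cases n) auto
  then have ev: "2 * (n * (n - 1) div 2) = n * (n - 1)" by simp
  have "n * (n + 1) = n * (n - 1) + 2 * n" using assms by (cases n) (simp_all add: algebra_simps)
  then have "n + (\<Sum>t<n. n - t) = n * (n - 1) div 2 + 2 * n" using sum_rev[of n] ev by linarith
  then show ?thesis by (simp add: power_add power_mult)
qed

theorem theorem1:
  fixes q :: complex and n :: nat and P f :: "complex fls"
  assumes "q \<noteq> 0" and "n \<ge> 1" and "P \<noteq> 0"
    and "fls_X * fls_sigma q f + f = P"
  shows "Lnn q P n (f ^ n) = (-1) ^ (n * (n - 1) div 2)"
proof -
  have "Lnn q P n (f ^ n) = foldr (\<lambda>k F. Lfactor q P n k \<circ> F) [n+1-n..<n+1] id (f ^ n)"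
    unfolding Lnn_def by simp
  also have "\<dots> = (-1) ^ (n + (\<Sum>t<n. n - t)) * hl (map (\<lambda>j. Pseq q P j - f) [0..<Suc n]) (n - n)"
    by (rule main_ind[OF assms(1,3,4)]) simp
  also have "\<dots> = (-1) ^ (n * (n - 1) div 2)"
    using sign_final[OF assms(2)] by simp
  finally show ?thesis .
qed
end
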